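(* Let $(M,\rho)$ be a metric space, let $f,g:M\to\mathbb{R}\cup\{+\infty\}$, and let $\lambda\in\mathbb{R}$ be such that $L_\lambda(f-g)\cap\operatorname{dom} f\cap\operatorname{dom} g\neq\varnothing$. Let $M_1:=L_\lambda(f-g)$ and $f_1:=f|_{M_1}$, regarded as a function on $(M_1,\rho)$. If $x\in M_1\cap\operatorname{dom} g$ satisfies $|\widetilde\nabla f|(x)>|\widetilde\nabla g|(x)$, then $|\widetilde\nabla f_1|(x)=|\widetilde\nabla f|(x)$.
   Context: Functions take values in $\mathbb{R}\cup\{+\infty\}$; $\operatorname{dom} f:=\{x:f(x)<+\infty\}$; the expression $\infty-\infty$ is undefined. For $\lambda\in\mathbb{R}$, $L_\lambda(f-g):=\{x\in\operatorname{dom} f:\ f(x)-g(x)\le\lambda\}$ (where $f(x)-g(x)=-\infty$ if $g(x)=+\infty$). $[t]^+:=\max\{0,t\}$, with $[f(x)-f(y)]^+:=0$ if $f(y)=+\infty$. For $x\in\operatorname{dom} f$, the global slope is $|\widetilde\nabla f|(x):=\sup_{y\neq x}\frac{[f(x)-f(y)]^+}{\rho(x,y)}\in[0,+\infty]$; for a restriction to a subset, $y$ ranges over the subset. *)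

theory Defs
  imports "HOL-Analysis.Analysis"
begin

text \<open>Extended-valued functions M \<rightarrow> R \<union> {+\<infinity>} are modelled as functions into ereal
  together with the hypothesis that -\<infinity> is never attained.\<close>

definition edom :: "('a \<Rightarrow> ereal) \<Rightarrow> 'a set" where
  "edom f = {x. f x < \<infinity>}"

text \<open>Sublevel set L_lambda(f - g); for x in dom f, f x - g x = -\<infinity> when g x = \<infinity>
  (this is ereal subtraction).\<close>
definition sublevel :: "real \<Rightarrow> ('a \<Rightarrow> ereal) \<Rightarrow> ('a \<Rightarrow> ereal) \<Rightarrow> 'a set" where
  "sublevel lam f g = {x \<in> edom f. f x - g x \<le> ereal lam}"

definition posdiff :: "ereal \<Rightarrow> ereal \<Rightarrow> ereal" where
  "posdiff a b = (if b = \<infinity> then 0 else max 0 (a - b))"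

text \<open>Global slope of f restricted to S at x (x \<in> S \<inter> dom f), value in [0,+\<infinity>];
  the supremum of the empty family is taken as 0.\<close>
definition gslope :: "'a::metric_space set \<Rightarrow> ('a \<Rightarrow> ereal) \<Rightarrow> 'a \<Rightarrow> ereal" where
  "gslope S f x = Sup ({0} \<union> (\<lambda>y. posdiff (f x) (f y) / ereal (dist x y)) ` (S - {x}))"

end

theory Submission
  imports Defs
begin

lemma posdiff_real: "posdiff (ereal a) (ereal b) = ereal (max 0 (a - b))"
  by (cases "0 \<le> a - b") (auto simp: posdiff_def max_def)

lemma ediv_real: "d \<noteq> 0 \<Longrightarrow> ereal a / ereal d = ereal (a / d)"
  by simp

theorem lemma2p5:
  fixes f g :: "'a::metric_space \<Rightarrow> ereal" and lam :: real and x :: 'a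
  assumes "\<forall>y. f y \<noteq> -\<infinity>" and "\<forall>y. g y \<noteq> -\<infinity>"
    and "sublevel lam f g \<inter> edom f \<inter> edom g \<noteq> {}"
    and "x \<in> sublevel lam f g" and "x \<in> edom g"
    and "gslope UNIV f x > gslope UNIV g x"
  shows "gslope (sublevel lam f g) f x = gslope UNIV f x"
proof -
  define S where "S = sublevel lam f g"
  obtain fx where fx: "f x = ereal fx"
    using assms(1,4) unfolding sublevel_def edom_def by (cases "f x") auto
  obtain gx where gx: "g x = ereal gx"
    using assms(2,5) unfolding edom_def by (cases "g x") auto
  have lamx: "fx - gx \<le> lam" using assms(4) fx gx unfolding sublevel_def by auto
  have le: "gslope S f x \<le> gslope UNIV f x"
    unfolding gslope_def by (rule Sup_subset_mono) auto
  have ge: "gslope UNIV f x \<le> gslope S f x"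
  proof (rule ccontr)
    assume "\<not> ?thesis"
    hence lt: "gslope S f x < gslope UNIV f x" by simp
    define c where "c = max (gslope S f x) (gslope UNIV g x)"
    have "c < gslope UNIV f x" using lt assms(6) unfolding c_def by simp
    then obtain a where a: "a \<in> {0} \<union> (\<lambda>y. posdiff (f x) (f y) / ereal (dist x y)) ` (UNIV - {x})"
      and ac: "c < a" unfolding gslope_def by (subst (asm) less_Sup_iff) blast
    have t0: "0 \<le> gslope UNIV g x" unfolding gslope_def by (auto intro: Sup_upper)
    have "a \<noteq> 0" using ac t0 unfolding c_def by auto
    then obtain y where y: "y \<noteq> x" and aeq: "a = posdiff (f x) (f y) / ereal (dist x y)"
      using a by auto
    have d: "dist x y > 0" using y by simp
    have bt: "posdiff (g x) (g y) / ereal (dist x y) \<le> gslope UNIV g x"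
      unfolding gslope_def using y by (intro Sup_upper) auto
    have ab: "posdiff (g x) (g y) / ereal (dist x y) < a"
      using bt ac unfolding c_def by auto
    have fyinf: "f y \<noteq> \<infinity>"
    proof
      assume "f y = \<infinity>" hence "a = 0" using aeq by (simp add: posdiff_def)
      thus False using \<open>a \<noteq> 0\<close> by simp
    qed
    then obtain fy where fy: "f y = ereal fy" using assms(1) by (cases "f y") auto
    have yS: "y \<in> S"
    proof (cases "g y = \<infinity>")
      case True thus ?thesis using fy unfolding S_def sublevel_def edom_def by auto
    next
      case False
      then obtain gy where gy: "g y = ereal gy" using assms(2) by (cases "g y") auto
      have hm: "max (ereal 0) (ereal r) = ereal (max 0 r)" for r by (cases "0 \<le> r") auto
      have "max 0 (gx - gy) / dist x y < max 0 (fx - fy) / dist x y"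
      proof -
        have "ereal (max 0 (gx - gy) / dist x y) < ereal (max 0 (fx - fy) / dist x y)"
          using ab unfolding aeq fx fy gx gy posdiff_real using d by (simp only: ediv_real)
        thus ?thesis by simp
      qed
      hence "max 0 (gx - gy) < max 0 (fx - fy)" using d by (simp add: divide_less_cancel)
      hence "fy - gy < fx - gx" by linarith
      thus ?thesis using lamx fy gy unfolding S_def sublevel_def edom_def by auto
    qed
    have "a \<le> gslope S f x"
      unfolding gslope_def aeq using yS y by (intro Sup_upper) auto
    thus False using ac unfolding c_def by auto
  qed
  show ?thesis using le ge unfolding S_def by simp
qed

end
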